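(* Let $m\ge5$ and $l\ge2$ be integers and let $G=C_{lm}(S)$ with $S=\{s\in\{1,\dots,\lfloor lm/2\rfloor\}: s=l\text{ or } l\nmid s\}$ (equivalently, the join of $l$ copies of the cycle $C_m$). Then for $i\ge1$, $$\beta_{i,i+1}(G)=lm\binom{(l-1)m+1}{i-1}+(l-1)\binom{lm}{i+1}-l\binom{(l-1)m}{i+1}.$$
   Context: The circulant graph $C_n(S)$ ($S\subseteq\{1,\dots,\lfloor n/2\rfloor\}$) has vertex set $\{0,\dots,n-1\}$ with $\{a,b\}$ an edge iff $\min(|a-b|,n-|a-b|)\in S$. For a graph $G$ on vertex set $V$, $R=\mathbb{K}[x_v:v\in V]$ over a fixed field $\mathbb{K}$, $I(G)=\langle x_ux_v:\{u,v\}\in E(G)\rangle$, and $\beta_{i,d}(G)=\beta_{i,d}(R/I(G))$ is the graded Betti number. Binomial coefficients $\binom{a}{b}$ are $0$ if $b<0$ or $b>a$. *)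

theory Defs
  imports Complex_Main "HOL-Library.Function_Algebras"
begin

definition circ_dist :: "nat \<Rightarrow> nat \<Rightarrow> nat \<Rightarrow> nat" where
  "circ_dist n a b = (let d = (if a \<le> b then b - a else a - b) in min d (n - d))"

definition circulant_adj :: "nat \<Rightarrow> nat set \<Rightarrow> nat \<Rightarrow> nat \<Rightarrow> bool" where
  "circulant_adj n S a b \<longleftrightarrow> a < n \<and> b < n \<and> a \<noteq> b \<and> circ_dist n a b \<in> S"

text \<open>R = K[x_0..x_(n-1)].
  Monomials are exponent vectors u :: nat => nat vanishing outside {0..<n}.
  R/I(G) has K-basis the standard monomials: those not divisible by any x_a x_b with E a b.
  beta_{i,d}(R/I) = dim_K Tor_i^R(R/I,K)_d = dim_K H_i(K(x) tensor R/I)_d, where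
  the Koszul complex K_i has basis u (x) e_F with u standard, F a subset of {0..<n} of card i,
  of degree deg u + |F|.\<close>

definition mon_deg :: "nat \<Rightarrow> (nat \<Rightarrow> nat) \<Rightarrow> nat" where
  "mon_deg n u = (\<Sum>k<n. u k)"

definition standard_mon :: "nat \<Rightarrow> (nat \<Rightarrow> nat \<Rightarrow> bool) \<Rightarrow> (nat \<Rightarrow> nat) \<Rightarrow> bool" where
  "standard_mon n E u \<longleftrightarrow> (\<forall>k. n \<le> k \<longrightarrow> u k = 0) \<and>
     \<not> (\<exists>a b. E a b \<and> 1 \<le> u a \<and> 1 \<le> u b)"

definition kbasis :: "nat \<Rightarrow> (nat \<Rightarrow> nat \<Rightarrow> bool) \<Rightarrow> nat \<Rightarrow> nat \<Rightarrow> ((nat \<Rightarrow> nat) \<times> nat set) set" where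
  "kbasis n E i d = {(u, F). standard_mon n E u \<and> F \<subseteq> {0..<n} \<and> card F = i \<and>
                             mon_deg n u + i = d}"

definition kchains :: "nat \<Rightarrow> (nat \<Rightarrow> nat \<Rightarrow> bool) \<Rightarrow> nat \<Rightarrow> nat \<Rightarrow>
    (((nat \<Rightarrow> nat) \<times> nat set) \<Rightarrow> 'k::field) set" where
  "kchains n E i d = {f. \<forall>x. x \<notin> kbasis n E i d \<longrightarrow> f x = 0}"

text \<open>Koszul differential (on chains of homological degree i \<ge> 1):
  d(u (x) e_F) = sum_{j in F} (-1)^{#{k in F. k < j}} (x_j u) (x) e_{F - {j}},
  where x_j u is 0 in R/I if it is not standard.  Coefficient of (v,G) in d(f):\<close>
definition kdiff :: "nat \<Rightarrow> (nat \<Rightarrow> nat \<Rightarrow> bool) \<Rightarrow> nat \<Rightarrow> nat \<Rightarrow>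
    (((nat \<Rightarrow> nat) \<times> nat set) \<Rightarrow> 'k::field) \<Rightarrow> ((nat \<Rightarrow> nat) \<times> nat set) \<Rightarrow> 'k" where
  "kdiff n E i d f = (\<lambda>(v, G).
     if (v, G) \<in> kbasis n E (i - 1) d then
       (\<Sum>j\<in>{j. j < n \<and> j \<notin> G \<and> 1 \<le> v j}.
          (-1) ^ card {k\<in>G. k < j} * f (v(j := v j - 1), insert j G))
     else 0)"

definition fun_scale :: "'k::field \<Rightarrow> ('a \<Rightarrow> 'k) \<Rightarrow> ('a \<Rightarrow> 'k)" where
  "fun_scale c f = (\<lambda>x. c * f x)"

definition kdim :: "('a \<Rightarrow> 'k::field) set \<Rightarrow> nat" where
  "kdim W = vector_space.dim (fun_scale :: 'k \<Rightarrow> ('a \<Rightarrow> 'k) \<Rightarrow> ('a \<Rightarrow> 'k)) W"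

definition betti :: "'k::field itself \<Rightarrow> nat \<Rightarrow> (nat \<Rightarrow> nat \<Rightarrow> bool) \<Rightarrow> nat \<Rightarrow> nat \<Rightarrow> nat" where
  "betti _ n E i d =
     kdim ((if i = 0 then kchains n E 0 d
            else {f \<in> kchains n E i d. kdiff n E i d f = (\<lambda>_. 0)}) :: (_ \<Rightarrow> 'k) set)
     - kdim ((kdiff n E (i + 1) d ` kchains n E (i + 1) d) :: (_ \<Rightarrow> 'k) set)"

end

theory Submission
  imports Defs
begin

interpretation fs: vector_space "fun_scale :: 'k::field \<Rightarrow> ('a \<Rightarrow> 'k) \<Rightarrow> ('a \<Rightarrow> 'k)"
  by unfold_locales (auto simp: fun_scale_def algebra_simps fun_eq_iff)

lemma kdim_basis:
  fixes B V :: "('a \<Rightarrow> 'k::field) set"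
  assumes "B \<subseteq> V" "V \<subseteq> fs.span B" "fs.independent B"
  shows "kdim V = card B"
  using fs.basis_card_eq_dim[OF assms] unfolding kdim_def by simp

lemma sum_fun_apply: "(sum g A) x = (\<Sum>a\<in>A. g a x)"
  by (induct A rule: infinite_finite_induct) auto

lemma fun_scale_apply[simp]: "fun_scale c f x = c * f x"
  by (simp add: fun_scale_def)

lemma diag_indep:
  fixes b :: "'i \<Rightarrow> 'a \<Rightarrow> 'k::field"
  assumes fin: "finite I"
    and nz: "\<And>p. p \<in> I \<Longrightarrow> b p (w p) \<noteq> 0"
    and z: "\<And>p q. p \<in> I \<Longrightarrow> q \<in> I \<Longrightarrow> q \<noteq> p \<Longrightarrow> b q (w p) = 0"
  shows "fs.independent (b ` I) \<and> card (b ` I) = card I"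
proof
  have inj: "inj_on b I"
  proof (rule inj_onI)
    fix p q assume "p \<in> I" "q \<in> I" "b p = b q"
    then show "p = q" using nz[of p] z[of p q] by metis
  qed
  then show "card (b ` I) = card I" by (rule card_image)
  show "fs.independent (b ` I)"
    unfolding fs.independent_explicit_module
  proof (intro allI impI)
    fix t u v
    assume t: "finite t" "t \<subseteq> b ` I" "(\<Sum>v\<in>t. fun_scale (u v) v) = (0 :: 'a \<Rightarrow> 'k)" "v \<in> t"
    then obtain p where p: "p \<in> I" "v = b p" by auto
    have "0 = (\<Sum>v\<in>t. fun_scale (u v) v) (w p)" using t(3) by simp
    also have "\<dots> = (\<Sum>v'\<in>t. u v' * v' (w p))" by (simp add: sum_fun_apply)
    also have "\<dots> = u v * v (w p)"
    proof (rule sum.remove[OF t(1) t(4), THEN trans])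
      have "(\<Sum>v'\<in>t - {v}. u v' * v' (w p)) = 0"
      proof (rule sum.neutral, rule ballI)
        fix v' assume "v' \<in> t - {v}"
        then obtain q where "q \<in> I" "v' = b q" "q \<noteq> p" using t(2) p by auto
        then show "u v' * v' (w p) = 0" using z[OF p(1)] by simp
      qed
      then show "u v * v (w p) + (\<Sum>v'\<in>t - {v}. u v' * v' (w p)) = u v * v (w p)" by simp
    qed
    finally show "u v = 0" using nz[OF p(1)] p(2) by simp
  qed
qed

definition delta :: "'a \<Rightarrow> 'a \<Rightarrow> 'k::field" where
  "delta p = (\<lambda>q. if q = p then 1 else 0)"

lemma finsupp_sum:
  fixes f :: "'a \<Rightarrow> 'k::field"
  assumes "finite B" "\<And>x. x \<notin> B \<Longrightarrow> f x = 0"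
  shows "f = (\<Sum>p\<in>B. fun_scale (f p) (delta p))"
proof
  fix x
  show "f x = (\<Sum>p\<in>B. fun_scale (f p) (delta p)) x"
    using assms by (cases "x \<in> B") (auto simp: sum_fun_apply delta_def if_distrib sum.delta cong: if_cong)
qed


definition emon :: "nat \<Rightarrow> nat \<Rightarrow> nat" where
  "emon v = (\<lambda>k. if k = v then 1 else 0)"
definition sqm :: "nat \<Rightarrow> nat \<Rightarrow> nat" where
  "sqm v = (\<lambda>k. if k = v then 2 else 0)"
definition pm :: "nat \<Rightarrow> nat \<Rightarrow> nat \<Rightarrow> nat" where
  "pm a b = (\<lambda>k. if k = a \<or> k = b then 1 else 0)"
definition sg :: "nat set \<Rightarrow> nat \<Rightarrow> 'k::field" where
  "sg G x = (-1) ^ card {k\<in>G. k < x}"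

lemma sg_nz[simp]: "sg G x \<noteq> (0::'k::field)"
  by (simp add: sg_def)
lemma sg_sq[simp]: "sg G x * sg G x = (1::'k::field)"
  by (simp add: sg_def power_mult_distrib[symmetric])

lemma sg_insert:
  assumes "b \<notin> G" "finite G"
  shows "sg (insert b G) a = (if b < a then - sg G a else (sg G a :: 'k::field))"
proof -
  have "{k\<in>insert b G. k < a} = (if b < a then insert b {k\<in>G. k < a} else {k\<in>G. k < a})"
    by auto
  then show ?thesis using assms by (auto simp: sg_def)
qed

lemma emon_inj: "emon v = emon w \<Longrightarrow> v = w"
  unfolding emon_def by (metis zero_neq_one)

lemma mon_deg_emon: "v < n \<Longrightarrow> mon_deg n (emon v) = 1"
  by (simp add: mon_deg_def emon_def)

lemma mon_deg_sqm: "v < n \<Longrightarrow> mon_deg n (sqm v) = 2"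
  by (simp add: mon_deg_def sqm_def)

lemma mon_deg_pm: "a < n \<Longrightarrow> b < n \<Longrightarrow> a \<noteq> b \<Longrightarrow> mon_deg n (pm a b) = 2"
proof -
  assume "a < n" "b < n" "a \<noteq> b"
  have "pm a b = (\<lambda>k. (if k = a then 1 else 0) + (if k = b then 1 else 0))"
    using \<open>a \<noteq> b\<close> by (auto simp: pm_def fun_eq_iff)
  then show ?thesis using \<open>a < n\<close> \<open>b < n\<close> by (simp add: mon_deg_def sum.distrib)
qed

lemma mon_deg1: assumes "\<forall>k. n \<le> k \<longrightarrow> u k = 0" "mon_deg n u = 1"
  shows "\<exists>v<n. u = emon v"
proof -
  have "sum u {..<n} = Suc 0" using assms by (simp add: mon_deg_def)
  then obtain a where a: "a \<in> {..<n}" "u a = Suc 0" "\<forall>b\<in>{..<n}. a \<noteq> b \<longrightarrow> u b = 0"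
    using sum_eq_Suc0_iff[of "{..<n}" u] by auto
  have "u = emon a"
  proof
    fix k show "u k = emon a k"
      using a assms(1) by (cases "k < n") (auto simp: emon_def)
  qed
  then show ?thesis using a by auto
qed

lemma mon_deg0: assumes "\<forall>k. n \<le> k \<longrightarrow> u k = 0" "mon_deg n u = 0"
  shows "u = (\<lambda>_. 0)"
proof
  fix k show "u k = 0"
    using assms by (cases "k < n") (auto simp: mon_deg_def)
qed

locale kz =
  fixes n :: nat and E :: "nat \<Rightarrow> nat \<Rightarrow> bool"
  assumes symE: "E a b \<Longrightarrow> E b a" and irrE: "\<not> E a a"
begin

lemma std_emon: "v < n \<Longrightarrow> standard_mon n E (emon v)"
  by (auto simp: standard_mon_def emon_def irrE split: if_splits)

lemma std_zero: "standard_mon n E (\<lambda>_. 0)"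
  by (auto simp: standard_mon_def)

lemma std_sqm: "v < n \<Longrightarrow> standard_mon n E (sqm v)"
  by (auto simp: standard_mon_def sqm_def irrE split: if_splits)

lemma std_pm: "a < n \<Longrightarrow> b < n \<Longrightarrow> \<not> E a b \<Longrightarrow> standard_mon n E (pm a b)"
  by (auto simp: standard_mon_def pm_def irrE split: if_splits dest: symE)

lemma kbasis1_iff:
  "(emon v, F) \<in> kbasis n E i (Suc i) \<longleftrightarrow> v < n \<and> F \<subseteq> {0..<n} \<and> card F = i"
proof
  assume h: "(emon v, F) \<in> kbasis n E i (Suc i)"
  then have "v < n"
    unfolding kbasis_def standard_mon_def emon_def
    by (auto dest!: spec[of _ v])
  then show "v < n \<and> F \<subseteq> {0..<n} \<and> card F = i" using h by (auto simp: kbasis_def)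
qed (auto simp: kbasis_def std_emon mon_deg_emon)

lemma kbasis1:
  "(u, F) \<in> kbasis n E i (Suc i) \<Longrightarrow> \<exists>v<n. u = emon v"
  by (rule mon_deg1) (auto simp: kbasis_def standard_mon_def)

lemma kbasis0_iff:
  "(u, F) \<in> kbasis n E j j \<longleftrightarrow> u = (\<lambda>_. 0) \<and> F \<subseteq> {0..<n} \<and> card F = j"
proof
  assume h: "(u, F) \<in> kbasis n E j j"
  then have "u = (\<lambda>_. 0)" by (intro mon_deg0) (auto simp: kbasis_def standard_mon_def)
  then show "u = (\<lambda>_. 0) \<and> F \<subseteq> {0..<n} \<and> card F = j" using h by (auto simp: kbasis_def)
qed (auto simp: kbasis_def std_zero mon_deg_def)

lemma kbasis_sqm:
  "v < n \<Longrightarrow> G \<subseteq> {0..<n} \<Longrightarrow> card G = i - 1 \<Longrightarrow> 1 \<le> i \<Longrightarrow> (sqm v, G) \<in> kbasis n E (i - 1) (Suc i)"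
  by (auto simp: kbasis_def std_sqm mon_deg_sqm)

lemma kbasis_pm:
  "a < n \<Longrightarrow> b < n \<Longrightarrow> a \<noteq> b \<Longrightarrow> \<not> E a b \<Longrightarrow> G \<subseteq> {0..<n} \<Longrightarrow> card G = i - 1 \<Longrightarrow> 1 \<le> i
   \<Longrightarrow> (pm a b, G) \<in> kbasis n E (i - 1) (Suc i)"
  by (auto simp: kbasis_def std_pm mon_deg_pm)

lemma KD1:
  "kdiff n E (Suc i) (Suc i) f (emon w, G) =
    (if (emon w, G) \<in> kbasis n E i (Suc i) \<and> w \<notin> G then sg G w * f (\<lambda>_. 0, insert w G) else 0)"
proof (cases "(emon w, G) \<in> kbasis n E i (Suc i)")
  case True
  then have "w < n" by (simp add: kbasis1_iff)
  have J: "{j. j < n \<and> j \<notin> G \<and> Suc 0 \<le> emon w j} = (if w \<in> G then {} else {w})"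
    using \<open>w < n\<close> by (auto simp: emon_def split: if_splits)
  have z: "(emon w)(w := emon w w - Suc 0) = (\<lambda>_. 0)" by (auto simp: emon_def fun_eq_iff)
  show ?thesis using True unfolding kdiff_def by (simp add: J z sg_def)
qed (simp add: kdiff_def)

lemma KD2:
  assumes "(sqm v, G) \<in> kbasis n E (i - 1) d" "v < n" "v \<notin> G"
  shows "kdiff n E i d f (sqm v, G) = sg G v * f (emon v, insert v G)"
proof -
  have J: "{j. j < n \<and> j \<notin> G \<and> Suc 0 \<le> sqm v j} = {v}"
    using assms by (auto simp: sqm_def split: if_splits)
  have z: "(sqm v)(v := sqm v v - Suc 0) = emon v" by (auto simp: emon_def sqm_def fun_eq_iff)
  show ?thesis using assms(1) unfolding kdiff_def by (simp add: J z sg_def)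
qed

lemma KD3:
  assumes "(pm a b, G) \<in> kbasis n E (i - 1) d" "a < n" "b < n" "a \<noteq> b" "a \<notin> G" "b \<notin> G"
  shows "kdiff n E i d f (pm a b, G) = sg G a * f (emon b, insert a G) + sg G b * f (emon a, insert b G)"
proof -
  have J: "{j. j < n \<and> j \<notin> G \<and> Suc 0 \<le> pm a b j} = {a, b}"
    using assms by (auto simp: pm_def split: if_splits)
  have za: "(pm a b)(a := pm a b a - Suc 0) = emon b" using assms(4) by (auto simp: emon_def pm_def fun_eq_iff)
  have zb: "(pm a b)(b := pm a b b - Suc 0) = emon a" using assms(4) by (auto simp: emon_def pm_def fun_eq_iff)
  show ?thesis using assms(1,4) unfolding kdiff_def by (simp add: J za zb sg_def)
qed

lemma kdiff_lin:
  assumes "finite B"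
  shows "kdiff n E i d (\<Sum>p\<in>B. fun_scale (c p) (g p)) = (\<Sum>p\<in>B. fun_scale (c p) (kdiff n E i d (g p)))"
proof
  fix x :: "(nat \<Rightarrow> nat) \<times> nat set"
  obtain v G where x: "x = (v, G)" by fastforce
  show "kdiff n E i d (\<Sum>p\<in>B. fun_scale (c p) (g p)) x = (\<Sum>p\<in>B. fun_scale (c p) (kdiff n E i d (g p))) x"
    unfolding x kdiff_def
    by (simp add: sum_fun_apply sum_distrib_left sum.swap[of _ B] mult.left_commute)
qed

end

context kz begin

definition NEW :: "nat set \<Rightarrow> nat \<Rightarrow> nat \<Rightarrow> bool" where
  "NEW W a b \<longleftrightarrow> a \<in> W \<and> b \<in> W \<and> a \<noteq> b \<and> \<not> E a b"

definition Conn :: "nat set \<Rightarrow> nat \<Rightarrow> nat \<Rightarrow> bool" where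
  "Conn W = (NEW W)\<^sup>*\<^sup>*"

definition Lrep :: "nat set \<Rightarrow> nat \<Rightarrow> nat" where
  "Lrep W a = Min {w\<in>W. Conn W a w}"

lemma NEW_sym: "NEW W a b \<Longrightarrow> NEW W b a"
  by (auto simp: NEW_def dest: symE)

lemma Conn_sym: "Conn W a b \<Longrightarrow> Conn W b a"
  unfolding Conn_def
proof (induct rule: rtranclp_induct)
  case (step y z)
  then show ?case using NEW_sym by (meson converse_rtranclp_into_rtranclp)
qed simp

lemma Conn_trans: "Conn W a b \<Longrightarrow> Conn W b c \<Longrightarrow> Conn W a c"
  unfolding Conn_def by simp

lemma Conn_refl[simp]: "Conn W a a"
  unfolding Conn_def by simp

lemma NEW_Conn: "NEW W a b \<Longrightarrow> Conn W a b"
  unfolding Conn_def by simp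

lemma Conn_mem: "Conn W a b \<Longrightarrow> a \<in> W \<Longrightarrow> b \<in> W"
  unfolding Conn_def by (induct rule: rtranclp_induct) (auto simp: NEW_def)

lemma Conn_Lrep_eq: "Conn W a b \<Longrightarrow> Lrep W a = Lrep W b"
proof -
  assume h: "Conn W a b"
  have "{w\<in>W. Conn W a w} = {w\<in>W. Conn W b w}"
    using h Conn_sym Conn_trans by blast
  then show ?thesis by (simp add: Lrep_def)
qed

lemma Lrep_mem:
  assumes "finite W" "a \<in> W"
  shows "Lrep W a \<in> W \<and> Conn W a (Lrep W a)"
proof -
  have "Lrep W a \<in> {w\<in>W. Conn W a w}"
    unfolding Lrep_def using assms by (intro Min_in) auto
  then show ?thesis by simp
qed

lemma Lrep_idem:
  assumes "finite W" "a \<in> W"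
  shows "Lrep W (Lrep W a) = Lrep W a"
  using Lrep_mem[OF assms] Conn_Lrep_eq by metis

lemma Lrep_isolated:
  assumes "finite W" "a \<in> W" "\<And>b. \<not> NEW W a b"
  shows "Lrep W a = a"
proof -
  have "Conn W a b \<Longrightarrow> b = a" for b
    unfolding Conn_def by (induct rule: rtranclp_induct) (auto simp: assms(3))
  then show ?thesis using Lrep_mem[OF assms(1,2)] by blast
qed

definition kb :: "nat set \<Rightarrow> nat \<Rightarrow> ((nat \<Rightarrow> nat) \<times> nat set) \<Rightarrow> 'k::field" where
  "kb W x = (\<lambda>(u, F). if F \<subseteq> W \<and> (\<exists>v. W - F = {v} \<and> u = emon v \<and> Lrep W v = x)
      then sg W (the_elem (W - F)) else 0)"

lemma kb_emon:
  "kb W x (emon v, F) = (if v \<notin> F \<and> W = insert v F \<and> Lrep W v = x then sg W v else 0)"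
proof (cases "v \<notin> F \<and> W = insert v F \<and> Lrep W v = x")
  case True
  then have "W - F = {v}" by auto
  then show ?thesis using True by (auto simp: kb_def)
next
  case False
  have nc: "\<not> (F \<subseteq> W \<and> (\<exists>v'. W - F = {v'} \<and> emon v = emon v' \<and> Lrep W v' = x))"
  proof
    assume "F \<subseteq> W \<and> (\<exists>v'. W - F = {v'} \<and> emon v = emon v' \<and> Lrep W v' = x)"
    then obtain v' where "F \<subseteq> W" "W - F = {v'}" "emon v = emon v'" "Lrep W v' = x" by blast
    moreover then have "v = v'" by (simp add: emon_inj)
    ultimately show False using False by blast
  qed
  show ?thesis by (subst kb_def) (simp only: split_conv if_not_P[OF nc] if_not_P[OF False])
qed

lemma kb_nz:
  assumes "kb W x (u, F) \<noteq> 0"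
  shows "\<exists>v. v \<notin> F \<and> W = insert v F \<and> u = emon v \<and> Lrep W v = x"
proof -
  from assms obtain v where "F \<subseteq> W" "W - F = {v}" "u = emon v" "Lrep W v = x"
    by (auto simp: kb_def split: if_splits)
  then show ?thesis by (intro exI[of _ v]) auto
qed

definition Idx :: "nat \<Rightarrow> (nat set \<times> nat) set" where
  "Idx i = {(W, x). W \<subseteq> {0..<n} \<and> card W = Suc i \<and> x \<in> W \<and> Lrep W x = x}"

lemma finite_Idx: "finite (Idx i)"
proof (rule finite_subset)
  show "Idx i \<subseteq> Pow {0..<n} \<times> {0..<n}" by (auto simp: Idx_def)
qed auto

definition Ker :: "nat \<Rightarrow> ((nat \<Rightarrow> nat) \<times> nat set \<Rightarrow> 'k::field) set" where
  "Ker i = {f \<in> kchains n E i (Suc i). kdiff n E i (Suc i) f = (\<lambda>_. 0)}"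

lemma kb_chain:
  assumes "(W, x) \<in> Idx i"
  shows "(kb W x :: _ \<Rightarrow> 'k::field) \<in> kchains n E i (Suc i)"
  unfolding kchains_def
proof (intro CollectI allI impI)
  fix p assume p: "p \<notin> kbasis n E i (Suc i)"
  obtain u F where pe: "p = (u, F)" by fastforce
  show "(kb W x p :: 'k) = 0"
  proof (rule ccontr)
    assume "kb W x p \<noteq> (0::'k)"
    then obtain v where v: "v \<notin> F" "W = insert v F" "u = emon v" "Lrep W v = x"
      using kb_nz pe by blast
    have "finite W" using assms by (auto simp: Idx_def intro: finite_subset)
    then have "card F = i" using v assms by (auto simp: Idx_def)
    then have "(emon v, F) \<in> kbasis n E i (Suc i)"
      using v assms by (auto simp: Idx_def kbasis1_iff)
    then show False using p pe v by simp
  qed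
qed

end

context kz begin

lemma kb_ker:
  assumes idx: "(W, x) \<in> Idx i" and i1: "1 \<le> i"
  shows "(kb W x :: _ \<Rightarrow> 'k::field) \<in> Ker i"
  unfolding Ker_def
proof (intro CollectI conjI)
  show "(kb W x :: _ \<Rightarrow> 'k) \<in> kchains n E i (Suc i)" by (rule kb_chain[OF idx])
  have Wn: "W \<subseteq> {0..<n}" and fW: "finite W" using idx by (auto simp: Idx_def intro: finite_subset)
  show "kdiff n E i (Suc i) (kb W x :: _ \<Rightarrow> 'k) = (\<lambda>_. 0)"
  proof
    fix p :: "(nat \<Rightarrow> nat) \<times> nat set"
    obtain u2 G where pe: "p = (u2, G)" by fastforce
    show "kdiff n E i (Suc i) (kb W x :: _ \<Rightarrow> 'k) p = 0"
    proof (cases "(u2, G) \<in> kbasis n E (i - 1) (Suc i)")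
      case False then show ?thesis by (simp add: pe kdiff_def)
    next
      case inb: True
      let ?J = "{j. j < n \<and> j \<notin> G \<and> 1 \<le> u2 j}"
      show ?thesis
      proof (cases "\<forall>j\<in>?J. (kb W x (u2(j := u2 j - 1), insert j G) :: 'k) = 0")
        case True then show ?thesis by (simp add: pe kdiff_def inb)
      next
        case False
        then obtain j where j: "j < n" "j \<notin> G" "1 \<le> u2 j"
          and nz: "(kb W x (u2(j := u2 j - 1), insert j G) :: 'k) \<noteq> 0" by auto
        from kb_nz[OF nz] obtain w where w: "w \<notin> insert j G" "W = insert w (insert j G)"
          "u2(j := u2 j - 1) = emon w" "Lrep W w = x" by blast
        have u2: "u2 = pm j w"
        proof
          fix k
          show "u2 k = pm j w k"
          proof (cases "k = j")
            case True
            have "u2 j - 1 = emon w j" using fun_cong[OF w(3), of j] by simp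
            then show ?thesis using True j(3) w(1) by (auto simp: emon_def pm_def)
          next
            case False
            then show ?thesis using fun_cong[OF w(3), of k] by (auto simp: emon_def pm_def)
          qed
        qed
        have std: "standard_mon n E u2" using inb by (simp add: kbasis_def)
        have u2jw: "u2 j = 1" "u2 w = 1" by (simp_all add: u2 pm_def)
        have nE: "\<not> E j w" using std u2jw unfolding standard_mon_def by force
        have wn: "w < n" using Wn w(2) by auto
        have Gn: "G \<subseteq> {0..<n}" using inb by (simp add: kbasis_def)
        have fG: "finite G" using Gn finite_subset by blast
        have jw: "j \<noteq> w" using w(1) by auto
        have kd: "kdiff n E i (Suc i) (kb W x :: _ \<Rightarrow> 'k) (pm j w, G) =
           sg G j * kb W x (emon w, insert j G) + sg G w * kb W x (emon j, insert w G)"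
          by (rule KD3) (use inb u2 j wn w(1) jw in auto)
        have NW: "NEW W j w" using w(2) jw nE by (auto simp: NEW_def)
        have Lj: "Lrep W j = x" using Conn_Lrep_eq[OF NEW_Conn[OF NW]] w(4) by simp
        have k1: "(kb W x (emon w, insert j G) :: 'k) = sg W w" using w by (simp add: kb_emon)
        have k2: "(kb W x (emon j, insert w G) :: 'k) = sg W j"
          using w Lj jw j(2) by (simp add: kb_emon insert_commute)
        have s1: "(sg W w :: 'k) = (if j < w then - sg G w else sg G w)"
          using w(1,2) fG j(2) by (simp add: sg_insert)
        have s2: "(sg W j :: 'k) = (if w < j then - sg G j else sg G j)"
          using w(1,2) fG j(2) jw by (simp add: sg_insert insert_commute)
        show ?thesis unfolding pe u2 kd k1 k2 s1 s2 using jw by auto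
      qed
    qed
  qed
qed

lemma Z1:
  fixes f :: "_ \<Rightarrow> 'k::field"
  assumes f: "f \<in> Ker i" and i1: "1 \<le> i"
    and inb: "(emon v, F) \<in> kbasis n E i (Suc i)" and vF: "v \<in> F"
  shows "f (emon v, F) = 0"
proof -
  have v: "v < n" "F \<subseteq> {0..<n}" "card F = i" using inb by (auto simp: kbasis1_iff)
  have fF: "finite F" using v(2) finite_subset by blast
  have "(sqm v, F - {v}) \<in> kbasis n E (i - 1) (Suc i)"
    by (rule kbasis_sqm) (use v vF fF i1 in auto)
  from KD2[OF this v(1)] have "kdiff n E i (Suc i) f (sqm v, F - {v}) = sg (F - {v}) v * f (emon v, F)"
    using vF by (simp add: insert_absorb)
  moreover have "kdiff n E i (Suc i) f = (\<lambda>_. 0)" using f by (simp add: Ker_def)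
  ultimately show ?thesis by simp
qed

definition hh :: "nat set \<Rightarrow> ((nat \<Rightarrow> nat) \<times> nat set \<Rightarrow> 'k::field) \<Rightarrow> nat \<Rightarrow> 'k" where
  "hh W f a = sg W a * f (emon a, W - {a})"

lemma Z2a:
  fixes f :: "_ \<Rightarrow> 'k::field"
  assumes f: "f \<in> Ker i" and i1: "1 \<le> i" and W: "W \<subseteq> {0..<n}" "card W = Suc i"
    and NW: "NEW W a b" and ab: "a < b"
  shows "hh W f a = hh W f b"
proof -
  have fW: "finite W" using W finite_subset by blast
  have a: "a \<in> W" "b \<in> W" "\<not> E a b" using NW by (auto simp: NEW_def)
  define G where "G = W - {a, b}"
  have fG: "finite G" using fW by (simp add: G_def)
  have cG: "card G = i - 1" using W a ab fW unfolding G_def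
    by (simp add: card_Diff_subset)
  have inb: "(pm a b, G) \<in> kbasis n E (i - 1) (Suc i)"
    by (rule kbasis_pm) (use W a ab cG i1 in \<open>auto simp: G_def\<close>)
  have kd: "kdiff n E i (Suc i) f (pm a b, G) = sg G a * f (emon b, insert a G) + sg G b * f (emon a, insert b G)"
    by (rule KD3[OF inb]) (use W a ab in \<open>auto simp: G_def\<close>)
  have "kdiff n E i (Suc i) f = (\<lambda>_. 0)" using f by (simp add: Ker_def)
  moreover have "insert a G = W - {b}" "insert b G = W - {a}" using a ab by (auto simp: G_def)
  ultimately have eq: "sg G a * f (emon b, W - {b}) + sg G b * f (emon a, W - {a}) = 0"
    using kd by simp
  have WW: "W = insert a (insert b G)" "W = insert b (insert a G)" using a by (auto simp: G_def)
  have s1: "(sg W a :: 'k) = sg G a"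
    using fG ab by (subst WW(1)) (simp add: sg_insert G_def)
  have s2: "(sg W b :: 'k) = - sg G b"
    using fG ab by (subst WW(2)) (simp add: sg_insert G_def)
  have "sg G a * sg G b * (sg G a * f (emon b, W - {b}) + sg G b * f (emon a, W - {a})) = 0"
    using eq by simp
  moreover have "sg G a * sg G b * (sg G a * f (emon b, W - {b}) + sg G b * f (emon a, W - {a}))
     = (sg G a * sg G a) * (sg G b * f (emon b, W - {b})) + (sg G b * sg G b) * (sg G a * f (emon a, W - {a}))"
    by algebra
  ultimately have "(sg G a * sg G a) * (sg G b * f (emon b, W - {b})) + (sg G b * sg G b) * (sg G a * f (emon a, W - {a})) = (0::'k)"
    by simp
  then have "sg G b * f (emon b, W - {b}) + sg G a * f (emon a, W - {a}) = (0::'k)" by simp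
  then show ?thesis unfolding hh_def s1 s2 by (simp add: algebra_simps add_eq_0_iff)
qed

lemma Z2:
  fixes f :: "_ \<Rightarrow> 'k::field"
  assumes f: "f \<in> Ker i" and i1: "1 \<le> i" and W: "W \<subseteq> {0..<n}" "card W = Suc i"
    and NW: "NEW W a b"
  shows "hh W f a = hh W f b"
proof -
  have "a \<noteq> b" using NW by (simp add: NEW_def)
  then consider "a < b" | "b < a" by linarith
  then show ?thesis
  proof cases
    case 1 then show ?thesis using Z2a[OF f i1 W NW] by simp
  next
    case 2 then show ?thesis using Z2a[OF f i1 W NEW_sym[OF NW]] by simp
  qed
qed

lemma Z3:
  fixes f :: "_ \<Rightarrow> 'k::field"
  assumes f: "f \<in> Ker i" and i1: "1 \<le> i" and W: "W \<subseteq> {0..<n}" "card W = Suc i"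
    and C: "Conn W a b"
  shows "hh W f a = hh W f b"
  using C unfolding Conn_def
  by (induct rule: rtranclp_induct) (use Z2[OF f i1 W] in auto)

end

context kz begin
definition kbp :: "nat set \<times> nat \<Rightarrow> ((nat \<Rightarrow> nat) \<times> nat set) \<Rightarrow> 'k::field" where
  "kbp p = kb (fst p) (snd p)"

lemma Ker_span:
  fixes f :: "_ \<Rightarrow> 'k::field"
  assumes f: "f \<in> Ker i" and i1: "1 \<le> i"
  shows "f = (\<Sum>p\<in>Idx i. fun_scale (hh (fst p) f (snd p)) (kbp p))"
proof
  fix q :: "(nat \<Rightarrow> nat) \<times> nat set"
  obtain u F where qe: "q = (u, F)" by fastforce
  have fch: "f \<in> kchains n E i (Suc i)" using f by (simp add: Ker_def)
  have RHS: "(\<Sum>p\<in>Idx i. fun_scale (hh (fst p) f (snd p)) (kbp p)) q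
      = (\<Sum>p\<in>Idx i. hh (fst p) f (snd p) * kbp p q)"
    by (simp add: sum_fun_apply)
  show "f q = (\<Sum>p\<in>Idx i. fun_scale (hh (fst p) f (snd p)) (kbp p)) q"
  proof (cases "(u, F) \<in> kbasis n E i (Suc i)")
    case False
    have "f q = 0" using fch False qe by (simp add: kchains_def)
    moreover have "kbp p q = (0::'k)" if "p \<in> Idx i" for p
    proof -
      obtain W x where pe: "p = (W, x)" by fastforce
      show ?thesis using kb_chain[of W x i, where 'k='k] that False qe by (simp add: pe kbp_def kchains_def)
    qed
    ultimately show ?thesis unfolding RHS by simp
  next
    case True
    then obtain v where v: "v < n" "u = emon v" using kbasis1 by blast
    have Fn: "F \<subseteq> {0..<n}" "card F = i" using True v by (auto simp: kbasis1_iff)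
    have fF: "finite F" using Fn finite_subset by blast
    show ?thesis
    proof (cases "v \<in> F")
      case True
      have "f q = 0" using Z1[OF f i1] True \<open>(u, F) \<in> kbasis n E i (Suc i)\<close> v qe by simp
      moreover have "kbp p q = (0::'k)" for p
        using True qe v by (simp add: kbp_def kb_emon)
      ultimately show ?thesis unfolding RHS by simp
    next
      case vF: False
      define W0 where "W0 = insert v F"
      define x0 where "x0 = Lrep W0 v"
      have W0: "W0 \<subseteq> {0..<n}" "card W0 = Suc i" "finite W0"
        using Fn v vF fF by (auto simp: W0_def)
      have vW0: "v \<in> W0" by (simp add: W0_def)
      have x0: "x0 \<in> W0" "Conn W0 v x0" using Lrep_mem[OF W0(3) vW0] by (auto simp: x0_def)
      have idx: "(W0, x0) \<in> Idx i"
        using W0 x0 Lrep_idem[OF W0(3) vW0] by (auto simp: Idx_def x0_def)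
      have terms: "hh (fst p) f (snd p) * kbp p q =
          (if p = (W0, x0) then hh W0 f x0 * sg W0 v else 0)" if "p \<in> Idx i" for p
      proof -
        obtain W x where pe: "p = (W, x)" by fastforce
        have "kbp p q = (if p = (W0, x0) then sg W0 v else (0::'k))"
          using vF by (auto simp: pe qe v kbp_def kb_emon W0_def x0_def)
        then show ?thesis by (simp add: pe)
      qed
      have "(\<Sum>p\<in>Idx i. hh (fst p) f (snd p) * kbp p q) = hh W0 f x0 * sg W0 v"
        using idx finite_Idx by (simp add: terms sum.delta' cong: sum.cong)
      also have "\<dots> = hh W0 f v * sg W0 v" using Z3[OF f i1 W0(1,2) x0(2)] by simp
      also have "\<dots> = (sg W0 v * sg W0 v) * f (emon v, W0 - {v})"
        by (simp add: hh_def mult_ac)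
      also have "W0 - {v} = F" using vF by (auto simp: W0_def)
      also have "(sg W0 v * sg W0 v) * f (emon v, F) = f q" by (simp add: qe v)
      finally show ?thesis unfolding RHS by simp
    qed
  qed
qed

end

context kz begin

lemma dim_Ker:
  assumes i1: "1 \<le> i"
  shows "kdim (Ker i :: (_ \<Rightarrow> 'k::field) set) = card (Idx i)"
proof -
  let ?w = "\<lambda>p::nat set \<times> nat. (emon (snd p), fst p - {snd p})"
  have D: "fs.independent (kbp ` Idx i :: (_ \<Rightarrow> 'k) set) \<and> card (kbp ` Idx i :: (_ \<Rightarrow> 'k) set) = card (Idx i)"
  proof (rule diag_indep[OF finite_Idx])
    fix p assume p: "p \<in> Idx i"
    obtain W x where pe: "p = (W, x)" by fastforce
    have "x \<in> W" "Lrep W x = x" using p by (auto simp: pe Idx_def)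
    then show "(kbp p (?w p) :: 'k) \<noteq> 0" by (simp add: pe kbp_def kb_emon insert_absorb)
  next
    fix p q assume p: "p \<in> Idx i" and q: "q \<in> Idx i" and ne: "q \<noteq> p"
    obtain W x where pe: "p = (W, x)" by fastforce
    obtain W' x' where qe: "q = (W', x')" by fastforce
    have "x \<in> W" "Lrep W x = x" using p by (auto simp: pe Idx_def)
    then show "(kbp q (?w p) :: 'k) = 0" using ne by (auto simp: pe qe kbp_def kb_emon insert_absorb)
  qed
  show ?thesis
  proof -
    have "kdim (Ker i :: (_ \<Rightarrow> 'k::field) set) = card (kbp ` Idx i :: (_ \<Rightarrow> 'k) set)"
    proof (rule kdim_basis)
      show "(kbp ` Idx i :: (_ \<Rightarrow> 'k) set) \<subseteq> Ker i"
        using kb_ker[OF _ i1] by (auto simp: kbp_def)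
      show "Ker i \<subseteq> fs.span (kbp ` Idx i :: (_ \<Rightarrow> 'k) set)"
      proof
        fix f :: "_ \<Rightarrow> 'k" assume f: "f \<in> Ker i"
        show "f \<in> fs.span (kbp ` Idx i)"
          by (subst Ker_span[OF f i1]) (intro fs.span_sum fs.span_scale fs.span_base imageI)
      qed
      show "fs.independent (kbp ` Idx i :: (_ \<Rightarrow> 'k) set)" using D by simp
    qed
    then show ?thesis using D by simp
  qed
qed

lemma kbasis0_eq: "kbasis n E j j = (\<lambda>F. (\<lambda>_. 0, F)) ` {F. F \<subseteq> {0..<n} \<and> card F = j}"
  using kbasis0_iff by auto

lemma card_kbasis0: "card (kbasis n E j j) = n choose j"
proof -
  have "card (kbasis n E j j) = card {F. F \<subseteq> {0..<n} \<and> card F = j}"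
    unfolding kbasis0_eq by (rule card_image) (auto simp: inj_on_def)
  also have "\<dots> = n choose j" using n_subsets[of "{0..<n}" j] by simp
  finally show ?thesis .
qed

lemma finite_kbasis0: "finite (kbasis n E j j)"
  unfolding kbasis0_eq by simp

lemma dim_Im:
  "kdim (kdiff n E (Suc i) (Suc i) ` kchains n E (Suc i) (Suc i) :: (_ \<Rightarrow> 'k::field) set) = n choose Suc i"
proof -
  let ?K = "kbasis n E (Suc i) (Suc i)"
  let ?b = "\<lambda>p. kdiff n E (Suc i) (Suc i) (delta p :: _ \<Rightarrow> 'k)"
  let ?w = "\<lambda>p::(nat \<Rightarrow> nat) \<times> nat set. (emon (Min (snd p)), snd p - {Min (snd p)})"
  have D: "fs.independent (?b ` ?K) \<and> card (?b ` ?K) = card ?K"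
  proof (rule diag_indep[OF finite_kbasis0])
    fix p assume p: "p \<in> ?K"
    obtain u F where pe: "p = (u, F)" by fastforce
    have F: "u = (\<lambda>_. 0)" "F \<subseteq> {0..<n}" "card F = Suc i" using p pe kbasis0_iff by auto
    have fF: "finite F" using F finite_subset by blast
    have Fne: "F \<noteq> {}" using F by auto
    have mF: "Min F \<in> F" using fF Fne by simp
    have inb: "(emon (Min F), F - {Min F}) \<in> kbasis n E i (Suc i)"
      using mF F fF by (auto simp: kbasis1_iff)
    show "?b p (?w p) \<noteq> 0"
      using inb mF by (simp add: pe KD1 insert_absorb delta_def F)
  next
    fix p q assume p: "p \<in> ?K" and q: "q \<in> ?K" and ne: "q \<noteq> p"
    obtain u F where pe: "p = (u, F)" by fastforce
    have F: "u = (\<lambda>_. 0)" "F \<subseteq> {0..<n}" "card F = Suc i" using p pe kbasis0_iff by auto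
    have fF: "finite F" using F finite_subset by blast
    have Fne: "F \<noteq> {}" using F by auto
    have mF: "Min F \<in> F" using fF Fne by simp
    show "?b q (?w p) = 0"
      using mF ne by (simp add: pe KD1 insert_absorb delta_def F)
  qed
  have "kdim (kdiff n E (Suc i) (Suc i) ` kchains n E (Suc i) (Suc i) :: (_ \<Rightarrow> 'k::field) set) = card (?b ` ?K)"
  proof (rule kdim_basis)
    show "?b ` ?K \<subseteq> kdiff n E (Suc i) (Suc i) ` kchains n E (Suc i) (Suc i)"
      by (auto simp: kchains_def delta_def)
    show "kdiff n E (Suc i) (Suc i) ` kchains n E (Suc i) (Suc i) \<subseteq> fs.span (?b ` ?K)"
    proof
      fix g :: "_ \<Rightarrow> 'k" assume "g \<in> kdiff n E (Suc i) (Suc i) ` kchains n E (Suc i) (Suc i)"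
      then obtain f where f: "f \<in> kchains n E (Suc i) (Suc i)" "g = kdiff n E (Suc i) (Suc i) f" by blast
      have e: "f = (\<Sum>p\<in>?K. fun_scale (f p) (delta p))"
        by (rule finsupp_sum[OF finite_kbasis0]) (use f in \<open>auto simp: kchains_def\<close>)
      have "g = (\<Sum>p\<in>?K. fun_scale (f p) (?b p))"
        unfolding f(2) by (rule trans[OF arg_cong[OF e, of "kdiff n E (Suc i) (Suc i)"] kdiff_lin[OF finite_kbasis0]])
      then show "g \<in> fs.span (?b ` ?K)"
        by (simp add: fs.span_sum fs.span_scale fs.span_base)
    qed
    show "fs.independent (?b ` ?K)" using D by simp
  qed
  then show ?thesis using D card_kbasis0 by simp
qed

lemma betti_eq:
  assumes "1 \<le> i"
  shows "betti TYPE('k::field) n E i (i + 1) = card (Idx i) - (n choose Suc i)"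
proof -
  have "i \<noteq> 0" using assms by simp
  then show ?thesis
    unfolding betti_def using dim_Ker[OF assms, where 'k='k] dim_Im[of i, where 'k='k]
    by (simp add: Ker_def)
qed

end

definition cadj :: "nat \<Rightarrow> nat \<Rightarrow> nat \<Rightarrow> bool" where
  "cadj m x y \<longleftrightarrow> (x + 1) mod m = y \<or> (y + 1) mod m = x"

lemma cadj_sym: "cadj m x y \<longleftrightarrow> cadj m y x"
  by (auto simp: cadj_def)

lemma circ_dist_sym: "circ_dist n a b = circ_dist n b a"
  by (simp add: circ_dist_def Let_def)

lemma cadj_lt:
  assumes "qa < qb" "qb < m"
  shows "cadj m qa qb \<longleftrightarrow> qb - qa = 1 \<or> m - (qb - qa) = 1"
proof -
  have "(qa + 1) mod m = qb \<longleftrightarrow> qb - qa = 1" using assms by auto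
  moreover have "(qb + 1) mod m = qa \<longleftrightarrow> m - (qb - qa) = 1"
  proof (cases "qb + 1 < m")
    case True then show ?thesis using assms by auto
  next
    case False then have "qb + 1 = m" using assms by auto
    then show ?thesis using assms by auto
  qed
  ultimately show ?thesis by (auto simp: cadj_def)
qed

locale cg =
  fixes l m :: nat
  assumes m5: "m \<ge> 5" and l2: "l \<ge> 2"
begin

abbreviation "nn \<equiv> l * m"
abbreviation "SS \<equiv> {s \<in> {1 .. (l * m) div 2}. s = l \<or> \<not> l dvd s}"
abbreviation "EE \<equiv> circulant_adj (l * m) SS"

lemma EE_sym: "EE a b \<Longrightarrow> EE b a"
  by (auto simp: circulant_adj_def circ_dist_sym)

lemma EE_irr: "\<not> EE a a"
  by (simp add: circulant_adj_def)

lemma E_lt: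
  assumes ab: "a < b" "b < nn"
  shows "EE a b \<longleftrightarrow> \<not> (a mod l = b mod l \<and> \<not> cadj m (a div l) (b div l))"
proof -
  define D where "D = b - a"
  have D: "1 \<le> D" "D < nn" using ab by (auto simp: D_def)
  define d where "d = min D (nn - D)"
  have cd: "circ_dist nn a b = d" using ab by (simp add: circ_dist_def d_def D_def Let_def)
  have d1: "d \<in> {1 .. nn div 2}" using D by (auto simp: d_def)
  have ln: "l dvd nn" by simp
  have dvd_d: "l dvd d \<longleftrightarrow> l dvd D"
  proof -
    have "l dvd (nn - D) \<longleftrightarrow> l dvd D"
      using D ln by (metis dvd_diff_nat less_imp_le_nat diff_diff_cancel)
    then show ?thesis by (simp add: d_def min_def)
  qed
  have dvd_D: "l dvd D \<longleftrightarrow> a mod l = b mod l"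
  proof -
    show ?thesis using mod_eq_dvd_iff_nat[of a b l] ab by (auto simp: D_def)
  qed
  have E_iff: "EE a b \<longleftrightarrow> d = l \<or> \<not> l dvd D"
    using ab d1 cd dvd_d by (auto simp: circulant_adj_def)
  show ?thesis
  proof (cases "a mod l = b mod l")
    case False then show ?thesis using E_iff dvd_D by simp
  next
    case True
    define qa where "qa = a div l"
    define qb where "qb = b div l"
    have l0: "l > 0" using l2 by simp
    have a_eq: "a = l * qa + a mod l" by (simp add: qa_def)
    have b_eq: "b = l * qb + a mod l" using True by (simp add: qb_def)
    have qab: "qa < qb"
      using ab a_eq b_eq by (metis add_less_cancel_right mult_less_cancel1)
    have qbm: "qb < m" using ab l0 by (simp add: qb_def less_mult_imp_div_less mult.commute)
    have DD: "D = l * (qb - qa)" using a_eq b_eq by (simp add: D_def diff_mult_distrib2)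
    have nD: "nn - D = l * (m - (qb - qa))" using DD by (simp add: diff_mult_distrib2)
    have "d = min (l * (qb - qa)) (l * (m - (qb - qa)))" using DD nD by (simp add: d_def)
    also have "\<dots> = l * min (qb - qa) (m - (qb - qa))" using l0 by (simp add: min_def)
    finally have md: "d = l * min (qb - qa) (m - (qb - qa))" .
    have "d = l \<longleftrightarrow> min (qb - qa) (m - (qb - qa)) = 1" unfolding md using l0 by simp
    then have dl: "d = l \<longleftrightarrow> qb - qa = 1 \<or> m - (qb - qa) = 1" using qab qbm by (auto simp: min_def)
    have c: "cadj m (a div l) (b div l) \<longleftrightarrow> qb - qa = 1 \<or> m - (qb - qa) = 1"
      using cadj_lt[OF qab qbm] unfolding qa_def qb_def .
    have "l dvd D" using dvd_D True by blast
    then show ?thesis using E_iff dl c True by blast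
  qed
qed

lemma E_iff:
  assumes "a < nn" "b < nn" "a \<noteq> b"
  shows "EE a b \<longleftrightarrow> \<not> (a mod l = b mod l \<and> \<not> cadj m (a div l) (b div l))"
proof (cases "a < b")
  case True then show ?thesis using E_lt assms by simp
next
  case False
  then have "b < a" using assms by simp
  have "EE a b \<longleftrightarrow> EE b a" using EE_sym by blast
  then show ?thesis using E_lt[of b a] \<open>b < a\<close> assms cadj_sym[of m "a div l" "b div l"] by auto
qed

end

definition sc :: "nat \<Rightarrow> nat \<Rightarrow> nat" where "sc m q = (q + 1) mod m"
definition pc :: "nat \<Rightarrow> nat \<Rightarrow> nat" where "pc m q = (q + (m - 1)) mod m"

lemma mq: "((a + j) mod m = (a + k) mod (m::nat)) \<longleftrightarrow> (j mod m = k mod m)"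
proof
  assume h: "(a + j) mod m = (a + k) mod m"
  have "int ((a + j) mod m) = int ((a + k) mod m)" using h by simp
  then have "(int a + int j) mod int m = (int a + int k) mod int m" by (simp add: of_nat_mod)
  then have "(int a + int j - int a) mod int m = (int a + int k - int a) mod int m"
    by (rule mod_diff_cong) simp
  then have "int j mod int m = int k mod int m" by simp
  then show "j mod m = k mod m" by (metis of_nat_eq_iff of_nat_mod)
next
  assume "j mod m = k mod m"
  then show "(a + j) mod m = (a + k) mod m" by (metis mod_add_right_eq)
qed

lemma cadj_sc: "cadj m x y \<longleftrightarrow> y = sc m x \<or> x = sc m y"
  by (auto simp: cadj_def sc_def)

lemma off_sc: "sc m ((a + j) mod m) = (a + (j + 1)) mod m"
  by (simp add: sc_def mod_Suc_eq add.assoc)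

lemma cadj_off:
  "cadj m ((a + j) mod m) ((a + k) mod m) \<longleftrightarrow> (k mod m = (j + 1) mod m \<or> j mod m = (k + 1) mod m)"
  using mq[of a k m "Suc j"] mq[of a j m "Suc k"] by (simp add: cadj_sc off_sc)

definition NQ :: "nat \<Rightarrow> nat set \<Rightarrow> nat \<Rightarrow> nat \<Rightarrow> bool" where
  "NQ m Q x y \<longleftrightarrow> x \<in> Q \<and> y \<in> Q \<and> x \<noteq> y \<and> \<not> cadj m x y"

lemma NQ_sym: "NQ m Q x y \<Longrightarrow> NQ m Q y x"
  by (auto simp: NQ_def cadj_sym)

lemma NQ_rt_sym: "(NQ m Q)\<^sup>*\<^sup>* x y \<Longrightarrow> (NQ m Q)\<^sup>*\<^sup>* y x"
proof (induct rule: rtranclp_induct)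
  case (step y z)
  then show ?case using NQ_sym by (meson converse_rtranclp_into_rtranclp)
qed simp

lemma suc_mod0: "k < m \<Longrightarrow> (Suc k mod m = 0 \<longleftrightarrow> Suc k = m)"
proof (cases "Suc k < m")
  case False
  assume "k < m" then have "Suc k = m" using False by simp
  then show ?thesis by simp
qed simp

lemma suc_mod1: "k < m \<Longrightarrow> 2 \<le> m \<Longrightarrow> (Suc k mod m = 1 \<longleftrightarrow> k = 0)"
proof (cases "Suc k < m")
  case False
  assume "k < m" "2 \<le> m" then have "Suc k = m" using False by simp
  then show ?thesis using \<open>2 \<le> m\<close> by auto
qed simp

lemma Qconn_sc:
  assumes m5: "m \<ge> 5" and Qm: "Q \<subseteq> {..<m}"
    and np: "\<And>q. q < m \<Longrightarrow> Q \<noteq> {q, sc m q}"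
    and nt: "\<And>q. q < m \<Longrightarrow> Q \<noteq> {pc m q, q, sc m q}"
    and a: "a \<in> Q" and b: "sc m a \<in> Q"
  shows "(NQ m Q)\<^sup>*\<^sup>* a (sc m a)"
proof -
  have am: "a < m" using a Qm by auto
  have m0: "m > 0" using m5 by simp
  have o1: "sc m a = (a + 1) mod m" by (simp add: sc_def)
  have o2: "sc m (sc m a) = (a + 2) mod m" by (simp add: sc_def mod_Suc_eq)
  have om: "pc m a = (a + (m - 1)) mod m" by (simp add: pc_def)
  show ?thesis
  proof (cases "\<exists>z\<in>Q. z \<notin> {pc m a, a, sc m a, sc m (sc m a)}")
    case True
    then obtain z where z: "z \<in> Q" "z \<notin> {pc m a, a, sc m a, sc m (sc m a)}" by blast
    have zm: "z < m" using z Qm by auto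
    define k where "k = (z + m - a) mod m"
    have "(a + k) mod m = (a + (z + m - a)) mod m" unfolding k_def by (simp add: mod_add_right_eq)
    also have "a + (z + m - a) = z + m" using am by simp
    also have "(z + m) mod m = z" using zm by simp
    finally have zk: "z = (a + k) mod m" by simp
    have km: "k < m" using m0 by (simp add: k_def)
    have k0: "k \<noteq> 0"
    proof assume "k = 0" then have "z = a" using zk am by simp then show False using z by blast qed
    have k1: "k \<noteq> 1"
    proof assume "k = 1" then have "z = sc m a" using zk o1 by simp then show False using z by blast qed
    have k2: "k \<noteq> 2"
    proof assume "k = 2" then have "z = sc m (sc m a)" using zk o2 by simp then show False using z by blast qed
    have k3: "k \<noteq> m - 1"
    proof assume "k = m - 1" then have "z = pc m a" using zk om by simp then show False using z by blast qed
    have c1: "\<not> cadj m a z" using cadj_off[of m a 0 k] km k0 k1 k3 m5 am zk suc_mod0[OF km] by auto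
    have c2: "\<not> cadj m z (sc m a)" using cadj_off[of m a k 1] km k0 k2 m5 am zk o1 suc_mod1[OF km] by auto
    have "NQ m Q a z"
      unfolding NQ_def using z a c1 by auto
    moreover have "NQ m Q z (sc m a)"
      unfolding NQ_def using z b c2 by auto
    ultimately show ?thesis by (meson r_into_rtranclp rtranclp.rtrancl_into_rtrancl)
  next
    case False
    then have sub: "Q \<subseteq> {pc m a, a, sc m a, sc m (sc m a)}" by blast
    show ?thesis
    proof (cases "pc m a \<in> Q")
      case pin: True
      show ?thesis
      proof (cases "sc m (sc m a) \<in> Q")
        case sin: True
        have d1: "a \<noteq> sc m (sc m a)" using mq[of a 0 m 2] am m5 o2 by simp
        have c1: "\<not> cadj m a (sc m (sc m a))" using cadj_off[of m a 0 2] am m5 o2 by simp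
        have s1: "NQ m Q a (sc m (sc m a))"
          unfolding NQ_def using a sin d1 c1 by auto
        have d2: "sc m (sc m a) \<noteq> pc m a" using mq[of a 2 m "m - 1"] m5 o2 om by simp
        have c2: "\<not> cadj m (sc m (sc m a)) (pc m a)" using cadj_off[of m a 2 "m - 1"] m5 o2 om by simp
        have s2: "NQ m Q (sc m (sc m a)) (pc m a)"
          unfolding NQ_def using sin pin d2 c2 by auto
        have d3: "pc m a \<noteq> sc m a" using mq[of a "m - 1" m 1] m5 o1 om by simp
        have c3: "\<not> cadj m (pc m a) (sc m a)" using cadj_off[of m a "m - 1" 1] m5 o1 om by simp
        have s3: "NQ m Q (pc m a) (sc m a)"
          unfolding NQ_def using b pin d3 c3 by auto
        show ?thesis using s1 s2 s3 by (meson r_into_rtranclp rtranclp.rtrancl_into_rtrancl)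
      next
        case False
        then have "Q = {pc m a, a, sc m a}" using sub pin a b by auto
        then show ?thesis using nt[OF am] by blast
      qed
    next
      case pnin: False
      show ?thesis
      proof (cases "sc m (sc m a) \<in> Q")
        case True
        have sam: "sc m a < m" using b Qm by auto
        have "pc m (sc m a) = ((a + 1) mod m + (m - 1)) mod m" by (simp add: pc_def o1)
        also have "\<dots> = (a + 1 + (m - 1)) mod m" by (simp add: mod_add_left_eq)
        also have "a + 1 + (m - 1) = a + m" using m0 by simp
        also have "(a + m) mod m = a" using am by simp
        finally have "pc m (sc m a) = a" .
        then have "Q = {pc m (sc m a), sc m a, sc m (sc m a)}" using sub pnin a b True by auto
        then show ?thesis using nt[OF sam] by blast
      next
        case False
        then have "Q = {a, sc m a}" using sub pnin a b by auto
        then show ?thesis using np[OF am] by blast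
      qed
    qed
  qed
qed


lemma Qconn:
  assumes m5: "m \<ge> 5" and Qm: "Q \<subseteq> {..<m}"
    and np: "\<And>q. q < m \<Longrightarrow> Q \<noteq> {q, sc m q}"
    and nt: "\<And>q. q < m \<Longrightarrow> Q \<noteq> {pc m q, q, sc m q}"
    and a: "a \<in> Q" and b: "b \<in> Q"
  shows "(NQ m Q)\<^sup>*\<^sup>* a b"
proof (cases "a = b")
  case False
  show ?thesis
  proof (cases "cadj m a b")
    case False
    then have "NQ m Q a b" using a b \<open>a \<noteq> b\<close> by (simp add: NQ_def)
    then show ?thesis by simp
  next
    case True
    then consider "b = sc m a" | "a = sc m b" by (auto simp: cadj_sc)
    then show ?thesis
    proof cases
      case 1 then show ?thesis using Qconn_sc[OF m5 Qm np nt a] b by simp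
    next
      case 2 then show ?thesis using Qconn_sc[OF m5 Qm np nt b] a NQ_rt_sym by simp
    qed
  qed
qed simp

lemma fiber_card:
  assumes CX: "C \<subseteq> X" and AC: "A \<subseteq> C" and fX: "finite X"
  shows "card {W. W \<subseteq> X \<and> card W = k \<and> W \<inter> C = A} =
    (if card A \<le> k then (card X - card C) choose (k - card A) else 0)"
proof (cases "card A \<le> k")
  case True
  have fC: "finite C" using CX fX finite_subset by blast
  have fA: "finite A" using AC fC finite_subset by blast
  have "{W. W \<subseteq> X \<and> card W = k \<and> W \<inter> C = A} = (\<lambda>Y. Y \<union> A) ` {Y. Y \<subseteq> X - C \<and> card Y = k - card A}"
  proof (intro equalityI subsetI)
    fix W assume "W \<in> {W. W \<subseteq> X \<and> card W = k \<and> W \<inter> C = A}"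
    then have W: "W \<subseteq> X" "card W = k" "W \<inter> C = A" by auto
    have fW: "finite W" using W fX finite_subset by blast
    have "W = (W - C) \<union> A" using W by auto
    moreover have "card (W - C) = k - card A"
    proof -
      have "W - C = W - A" using W by auto
      moreover have "A \<subseteq> W" using W by auto
      ultimately show ?thesis using W fW by (simp add: card_Diff_subset fA)
    qed
    moreover have "W - C \<subseteq> X - C" using W by auto
    ultimately show "W \<in> (\<lambda>Y. Y \<union> A) ` {Y. Y \<subseteq> X - C \<and> card Y = k - card A}" by blast
  next
    fix W assume "W \<in> (\<lambda>Y. Y \<union> A) ` {Y. Y \<subseteq> X - C \<and> card Y = k - card A}"
    then obtain Y where Y: "Y \<subseteq> X - C" "card Y = k - card A" "W = Y \<union> A" by blast
    have fY: "finite Y" using Y fX finite_subset by blast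
    have "Y \<inter> A = {}" using Y AC by blast
    then have "card W = card Y + card A" using Y fY fA by (simp add: card_Un_disjoint)
    then show "W \<in> {W. W \<subseteq> X \<and> card W = k \<and> W \<inter> C = A}" using Y AC CX True by auto
  qed
  moreover have "inj_on (\<lambda>Y. Y \<union> A) {Y. Y \<subseteq> X - C \<and> card Y = k - card A}"
  proof (rule inj_onI)
    fix Y Y' assume "Y \<in> {Y. Y \<subseteq> X - C \<and> card Y = k - card A}" "Y' \<in> {Y. Y \<subseteq> X - C \<and> card Y = k - card A}"
      "Y \<union> A = Y' \<union> A"
    then show "Y = Y'" using AC by blast
  qed
  moreover have "card {Y. Y \<subseteq> X - C \<and> card Y = k - card A} = (card X - card C) choose (k - card A)"
    using n_subsets[of "X - C" "k - card A"] fX CX fC by (simp add: card_Diff_subset)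
  ultimately show ?thesis using True by (simp add: card_image)
next
  case False
  have "{W. W \<subseteq> X \<and> card W = k \<and> W \<inter> C = A} = {}"
  proof (rule ccontr)
    assume "{W. W \<subseteq> X \<and> card W = k \<and> W \<inter> C = A} \<noteq> {}"
    then obtain W where W: "W \<subseteq> X" "card W = k" "W \<inter> C = A" by blast
    have "finite W" using W fX finite_subset by blast
    then have "card A \<le> card W" using W by (intro card_mono) auto
    then show False using W False by simp
  qed
  then show ?thesis using False by (simp only: card.empty if_False)
qed


context kz begin

lemma Conn_isol:
  assumes "\<And>b. \<not> NEW W a b" "Conn W a b"
  shows "b = a"
  using assms(2) unfolding Conn_def by (induct rule: rtranclp_induct) (auto simp: assms(1))

lemma cls_eq:
  assumes "finite W"
  shows "{x\<in>W. Lrep W x = x} = Lrep W ` W"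
  using Lrep_mem[OF assms] Lrep_idem[OF assms] by force

end

context cg begin

sublocale kz "l * m" EE
proof
  fix a b show "EE a b \<Longrightarrow> EE b a" by (rule EE_sym)
  show "\<not> EE a a" by (rule EE_irr)
qed

lemma l0: "l > 0" using l2 by simp
lemma m0: "m > 0" using m5 by simp

definition vx :: "nat \<Rightarrow> nat \<Rightarrow> nat" where "vx r q = r + l * q"

lemma vx_div: "r < l \<Longrightarrow> vx r q div l = q"
  by (simp add: vx_def)
lemma vx_mod: "r < l \<Longrightarrow> vx r q mod l = r"
  by (simp add: vx_def)
lemma vx_lt: "r < l \<Longrightarrow> q < m \<Longrightarrow> vx r q < l * m"
proof -
  assume "r < l" "q < m"
  then have "r + l * q < l + l * q" by simp
  also have "\<dots> = l * (q + 1)" by simp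
  also have "\<dots> \<le> l * m" using \<open>q < m\<close> by (intro mult_le_mono2) simp
  finally show ?thesis by (simp add: vx_def)
qed
lemma vx_inj: "r < l \<Longrightarrow> vx r q = vx r q' \<longleftrightarrow> q = q'"
  by (simp add: vx_def)

definition Cl :: "nat \<Rightarrow> nat set" where "Cl r = {v. v < l * m \<and> v mod l = r}"

lemma Cl_eq: "r < l \<Longrightarrow> Cl r = vx r ` {..<m}"
proof (intro equalityI subsetI)
  fix v assume r: "r < l" and v: "v \<in> Cl r"
  then have "v = vx r (v div l)" using div_mult_mod_eq[of v l] by (simp add: Cl_def vx_def mult.commute)
  moreover have "v div l < m" using v l0 by (simp add: Cl_def less_mult_imp_div_less mult.commute)
  ultimately show "v \<in> vx r ` {..<m}" by blast
qed (auto simp: Cl_def vx_lt vx_mod)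

lemma card_Cl: "r < l \<Longrightarrow> card (Cl r) = m"
  by (simp add: Cl_eq card_image inj_on_def vx_inj)

lemma Cl_sub: "Cl r \<subseteq> {0..<l * m}"
  by (auto simp: Cl_def)

lemma sc_lt: "sc m q < m" using m0 by (simp add: sc_def)
lemma pc_lt: "pc m q < m" using m0 by (simp add: pc_def)

lemma qfacts:
  assumes q: "q < m"
  shows "sc m q \<noteq> q" "pc m q \<noteq> q" "pc m q \<noteq> sc m q"
    "cadj m q (sc m q)" "cadj m (pc m q) q" "\<not> cadj m (pc m q) (sc m q)"
proof -
  have o0: "q = (q + 0) mod m" using q by simp
  have o1: "sc m q = (q + 1) mod m" by (simp add: sc_def)
  have om: "pc m q = (q + (m - 1)) mod m" by (simp add: pc_def)
  show "sc m q \<noteq> q" using mq[of q 1 m 0] m5 q o1 by simp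
  show "pc m q \<noteq> q" using mq[of q "m - 1" m 0] m5 q om by simp
  show "pc m q \<noteq> sc m q" using mq[of q "m - 1" m 1] m5 om o1 by simp
  show "cadj m q (sc m q)" by (simp add: cadj_sc)
  show "cadj m (pc m q) q" using cadj_off[of m q "m - 1" 0] m5 q om by simp
  show "\<not> cadj m (pc m q) (sc m q)" using cadj_off[of m q "m - 1" 1] m5 om o1 by simp
qed

lemma NEW_iff:
  assumes "W \<subseteq> {0..<l * m}"
  shows "NEW W a b \<longleftrightarrow> a \<in> W \<and> b \<in> W \<and> a \<noteq> b \<and> a mod l = b mod l \<and> \<not> cadj m (a div l) (b div l)"
proof (cases "a \<in> W \<and> b \<in> W \<and> a \<noteq> b")
  case True
  then have "a < l * m" "b < l * m" using assms by auto
  then show ?thesis unfolding NEW_def using E_iff[of a b] True by blast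
next
  case False
  then show ?thesis unfolding NEW_def by blast
qed

lemma Conn_mod:
  assumes "W \<subseteq> {0..<l * m}" "Conn W a b"
  shows "a mod l = b mod l"
  using assms(2) unfolding Conn_def
proof (induct rule: rtranclp_induct)
  case (step y z) then show ?case unfolding NEW_iff[OF assms(1)] by simp
qed simp

end

context kz begin
lemma NEW_neq: "NEW W a b \<Longrightarrow> a \<noteq> b \<and> a \<in> W \<and> b \<in> W"
  by (simp add: NEW_def)
end

context cg begin

definition P2 :: "nat \<Rightarrow> nat \<Rightarrow> nat set" where "P2 r q = {vx r q, vx r (sc m q)}"
definition P3 :: "nat \<Rightarrow> nat \<Rightarrow> nat set" where "P3 r q = {vx r (pc m q), vx r q, vx r (sc m q)}"
definition SPL :: "nat \<Rightarrow> nat set set" where "SPL r = P2 r ` {..<m} \<union> P3 r ` {..<m}"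

lemma NEW_stay:
  assumes W: "W \<subseteq> {0..<l * m}" and a: "a \<in> W \<inter> Cl r" and N: "NEW W a w"
  shows "w \<in> W \<inter> Cl r"
  using N a W unfolding NEW_iff[OF W] by (auto simp: Cl_def)

lemma class_card:
  assumes W: "W \<subseteq> {0..<l * m}" and r: "r < l"
  shows "card (Lrep W ` (W \<inter> Cl r)) =
    (if W \<inter> Cl r = {} then 0 else 1) + (if W \<inter> Cl r \<in> SPL r then 1 else 0)"
proof -
  define U where "U = W \<inter> Cl r"
  have fW: "finite W" using W finite_subset by blast
  have stay: "\<And>a w. a \<in> U \<Longrightarrow> NEW W a w \<Longrightarrow> w \<in> U"
    unfolding U_def using NEW_stay[OF W] by blast
  have NEWvx: "NEW W (vx r q1) (vx r q2) \<longleftrightarrow> vx r q1 \<in> W \<and> vx r q2 \<in> W \<and> q1 \<noteq> q2 \<and> \<not> cadj m q1 q2" for q1 q2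
    unfolding NEW_iff[OF W] using r by (simp add: vx_div vx_mod vx_inj)
  show ?thesis
  proof (cases "U \<in> SPL r")
    case True
    then obtain q where q: "q < m" "U = P2 r q \<or> U = P3 r q" by (auto simp: SPL_def)
    have Ur: "U \<subseteq> W" by (simp add: U_def)
    from q(2) show ?thesis
    proof
      assume U2: "U = P2 r q"
      let ?a = "vx r q" let ?b = "vx r (sc m q)"
      have ab: "?a \<noteq> ?b" using qfacts[OF q(1)] r by (simp add: vx_inj)
      have inU: "?a \<in> U" "?b \<in> U" using U2 by (auto simp: P2_def)
      have ia: "\<not> NEW W ?a w" for w
      proof
        assume N: "NEW W ?a w"
        then have "w \<in> U" "w \<noteq> ?a" using stay inU NEW_neq by blast+
        then have "w = ?b" using U2 by (auto simp: P2_def)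
        moreover have "\<not> NEW W ?a ?b" unfolding NEWvx using qfacts[OF q(1)] by simp
        ultimately show False using N by blast
      qed
      have ib: "\<not> NEW W ?b w" for w
      proof
        assume N: "NEW W ?b w"
        then have "w \<in> U" "w \<noteq> ?b" using stay inU NEW_neq by blast+
        then have "w = ?a" using U2 by (auto simp: P2_def)
        moreover have "cadj m (sc m q) q" using qfacts(4)[OF q(1)] by (subst cadj_sym)
        then have "\<not> NEW W ?b ?a" unfolding NEWvx by simp
        ultimately show False using N by blast
      qed
      have "Lrep W ` U = {?a, ?b}"
        using Lrep_isolated[OF fW _ ia] Lrep_isolated[OF fW _ ib] inU Ur U2 by (auto simp: P2_def)
      then have "card (Lrep W ` U) = 2" using ab by simp
      then show ?thesis using True inU by (auto simp: U_def)
    next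
      assume U3: "U = P3 r q"
      let ?p = "vx r (pc m q)" let ?x = "vx r q" let ?s = "vx r (sc m q)"
      have d: "?p \<noteq> ?x" "?x \<noteq> ?s" "?p \<noteq> ?s" using qfacts[OF q(1)] r by (auto simp: vx_inj)
      have inU: "?p \<in> U" "?x \<in> U" "?s \<in> U" using U3 by (auto simp: P3_def)
      have ix: "\<not> NEW W ?x w" for w
      proof
        assume N: "NEW W ?x w"
        then have "w \<in> U" "w \<noteq> ?x" using stay inU NEW_neq by blast+
        then have "w = ?p \<or> w = ?s" using U3 by (auto simp: P3_def)
        moreover have "cadj m q (pc m q)" using qfacts(5)[OF q(1)] by (subst cadj_sym)
        then have "\<not> NEW W ?x ?p" unfolding NEWvx by simp
        moreover have "\<not> NEW W ?x ?s" unfolding NEWvx using qfacts(4)[OF q(1)] by simp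
        ultimately show False using N by blast
      qed
      have Lx: "Lrep W ?x = ?x" using Lrep_isolated[OF fW _ ix] inU Ur by auto
      have Nps: "NEW W ?p ?s" unfolding NEWvx using qfacts[OF q(1)] inU Ur by auto
      have Lps: "Lrep W ?s = Lrep W ?p" using Conn_Lrep_eq[OF NEW_Conn[OF Nps]] by simp
      have Lp: "Lrep W ?p \<noteq> ?x"
      proof
        assume h: "Lrep W ?p = ?x"
        have "Conn W ?p ?x" using Lrep_mem[OF fW, of ?p] inU Ur h by auto
        then have "?p = ?x" using Conn_isol[OF ix] Conn_sym by blast
        then show False using d by simp
      qed
      have "Lrep W ` U = {?x, Lrep W ?p}" using Lx Lps U3 by (auto simp: P3_def)
      then have "card (Lrep W ` U) = 2" using Lp by simp
      then show ?thesis using True inU by (auto simp: U_def)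
    qed
  next
    case nspl: False
    show ?thesis
    proof (cases "U = {}")
      case True then show ?thesis using nspl by (simp add: U_def)
    next
      case ne: False
      define Q where "Q = {q. q < m \<and> vx r q \<in> W}"
      have UQ: "U = vx r ` Q" unfolding U_def Q_def Cl_eq[OF r] by auto
      have Qm: "Q \<subseteq> {..<m}" by (auto simp: Q_def)
      have np: "Q \<noteq> {q, sc m q}" if "q < m" for q
      proof
        assume "Q = {q, sc m q}"
        then have "U = P2 r q" by (simp add: UQ P2_def)
        then show False using nspl that by (auto simp: SPL_def)
      qed
      have nt: "Q \<noteq> {pc m q, q, sc m q}" if "q < m" for q
      proof
        assume "Q = {pc m q, q, sc m q}"
        then have "U = P3 r q" by (simp add: UQ P3_def)
        then show False using nspl that by (auto simp: SPL_def)
      qed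
      have lift: "Conn W (vx r q1) (vx r q2)" if "(NQ m Q)\<^sup>*\<^sup>* q1 q2" for q1 q2
        using that unfolding Conn_def
      proof (induct rule: rtranclp_induct)
        case (step y z)
        then have "NEW W (vx r y) (vx r z)" unfolding NEWvx NQ_def Q_def by auto
        then show ?case using step(3) by simp
      qed simp
      have allc: "Lrep W a = Lrep W b" if ab: "a \<in> U" "b \<in> U" for a b
      proof -
        obtain q1 q2 where qq: "q1 \<in> Q" "q2 \<in> Q" "a = vx r q1" "b = vx r q2" using ab UQ by auto
        have "Conn W (vx r q1) (vx r q2)" by (rule lift, rule Qconn[OF m5 Qm np nt qq(1,2)])
        from Conn_Lrep_eq[OF this] show ?thesis using qq(3,4) by simp
      qed
      obtain a0 where a0: "a0 \<in> U" using ne by blast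
      have "Lrep W ` U = {Lrep W a0}"
      proof
        show "Lrep W ` U \<subseteq> {Lrep W a0}" using allc a0 by blast
        show "{Lrep W a0} \<subseteq> Lrep W ` U" using a0 by blast
      qed
      then show ?thesis using ne nspl by (simp add: U_def)
    qed
  qed
qed

end

lemma sum_if_card: "finite X \<Longrightarrow> (\<Sum>x\<in>X. if P x then 1 else 0 :: nat) = card {x\<in>X. P x}"
  by (simp add: sum.inter_filter[symmetric])

context cg begin

lemma offs:
  assumes q: "q < m"
  shows "q = (q + 0) mod m" "sc m q = (q + 1) mod m" "sc m (sc m q) = (q + 2) mod m"
    "pc m q = (q + (m - 1)) mod m"
  using q by (simp_all add: sc_def pc_def mod_Suc_eq)

lemma sc_pc: "q < m \<Longrightarrow> sc m (pc m q) = q"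
proof -
  assume q: "q < m"
  have "sc m (pc m q) = ((q + (m - 1)) mod m + 1) mod m" by (simp add: sc_def pc_def)
  also have "\<dots> = (q + (m - 1) + 1) mod m" by (rule mod_add_left_eq)
  also have "q + (m - 1) + 1 = q + m" using m0 by simp
  finally show ?thesis using q by simp
qed

lemma T_ne:
  assumes q: "q' < m" and e: "q = sc m q'"
  shows "{pc m q, q, sc m q} \<noteq> {pc m q', q', sc m q'}"
proof
  assume h: "{pc m q, q, sc m q} = {pc m q', q', sc m q'}"
  have "sc m q \<in> {pc m q', q', sc m q'}" using h by blast
  moreover have "sc m q = (q' + 2) mod m" using offs[OF q] e by simp
  moreover have "(q' + 2) mod m \<noteq> (q' + (m - 1)) mod m" using mq[of q' 2 m "m - 1"] m5 by simp
  moreover have "(q' + 2) mod m \<noteq> (q' + 0) mod m" using mq[of q' 2 m 0] m5 by simp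
  moreover have "(q' + 2) mod m \<noteq> (q' + 1) mod m" using mq[of q' 2 m 1] m5 by simp
  ultimately show False using offs[OF q] by auto
qed

lemma T_inj:
  assumes q: "q < m" "q' < m" and h: "{pc m q, q, sc m q} = {pc m q', q', sc m q'}"
  shows "q = q'"
proof -
  have "q \<in> {pc m q', q', sc m q'}" using h by blast
  then consider "q = pc m q'" | "q = q'" | "q = sc m q'" by blast
  then show ?thesis
  proof cases
    case 1
    then have "q' = sc m q" using sc_pc[OF q(2)] by simp
    then show ?thesis using T_ne[OF q(1)] h by metis
  next
    case 3 then show ?thesis using T_ne[OF q(2)] h by metis
  qed simp
qed

lemma D_inj:
  assumes q: "q < m" "q' < m" and h: "{q, sc m q} = {q', sc m q'}"
  shows "q = q'"
proof (rule ccontr)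
  assume ne: "q \<noteq> q'"
  then have "q = sc m q'" "sc m q = q'" using h by (auto simp: doubleton_eq_iff)
  then have "sc m (sc m q') = q'" by simp
  then have "(q' + 2) mod m = (q' + 0) mod m" using offs[OF q(2)] by simp
  then show False using mq[of q' 2 m 0] m5 by simp
qed

lemma vx_img_inj: "r < l \<Longrightarrow> vx r ` A = vx r ` B \<Longrightarrow> A = B"
  using vx_inj by (metis inj_on_def inj_on_image_eq_iff subset_UNIV)

lemma P2_img: "P2 r q = vx r ` {q, sc m q}" by (simp add: P2_def)
lemma P3_img: "P3 r q = vx r ` {pc m q, q, sc m q}" by (simp add: P3_def)

lemma card_P2: "r < l \<Longrightarrow> q < m \<Longrightarrow> card (P2 r q) = 2"
  using qfacts[of q] by (simp add: P2_def vx_inj)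
lemma card_P3: "r < l \<Longrightarrow> q < m \<Longrightarrow> card (P3 r q) = 3"
  using qfacts[of q] by (simp add: P3_def vx_inj)

lemma sum_SPL:
  assumes r: "r < l"
  shows "(\<Sum>A\<in>SPL r. h (card A)) = m * h 2 + m * (h 3 :: nat)"
proof -
  have i2: "inj_on (P2 r) {..<m}"
    by (rule inj_onI) (use D_inj vx_img_inj[OF r] in \<open>auto simp: P2_img\<close>)
  have i3: "inj_on (P3 r) {..<m}"
    by (rule inj_onI) (use T_inj vx_img_inj[OF r] in \<open>auto simp: P3_img\<close>)
  have disj: "P2 r ` {..<m} \<inter> P3 r ` {..<m} = {}"
    using card_P2[OF r] card_P3[OF r] by force
  have "(\<Sum>A\<in>SPL r. h (card A)) = (\<Sum>A\<in>P2 r ` {..<m}. h (card A)) + (\<Sum>A\<in>P3 r ` {..<m}. h (card A))"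
    unfolding SPL_def by (rule sum.union_disjoint) (use disj in auto)
  also have "(\<Sum>A\<in>P2 r ` {..<m}. h (card A)) = (\<Sum>q<m. h (card (P2 r q)))"
    by (rule sum.reindex[OF i2, unfolded comp_def])
  also have "\<dots> = m * h 2" using card_P2[OF r] by simp
  also have "(\<Sum>A\<in>P3 r ` {..<m}. h (card A)) = (\<Sum>q<m. h (card (P3 r q)))"
    by (rule sum.reindex[OF i3, unfolded comp_def])
  also have "\<dots> = m * h 3" using card_P3[OF r] by simp
  finally show ?thesis .
qed

end

context kz begin
lemma Idx_lower: "card {W. W \<subseteq> {0..<n} \<and> card W = Suc i} \<le> card (Idx i)"
proof (rule card_inj_on_le[where f = "\<lambda>W. (W, Lrep W (Min W))"])
  show "inj_on (\<lambda>W. (W, Lrep W (Min W))) {W. W \<subseteq> {0..<n} \<and> card W = Suc i}"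
    by (auto simp: inj_on_def)
  show "finite (Idx i)" by (rule finite_Idx)
  show "(\<lambda>W. (W, Lrep W (Min W))) ` {W. W \<subseteq> {0..<n} \<and> card W = Suc i} \<subseteq> Idx i"
  proof clarify
    fix W assume W: "W \<subseteq> {0..<n}" "card W = Suc i"
    have fW: "finite W" using W finite_subset by blast
    have ne: "W \<noteq> {}" using W by auto
    have mW: "Min W \<in> W" using fW ne by simp
    show "(W, Lrep W (Min W)) \<in> Idx i"
      using W Lrep_mem[OF fW mW] Lrep_idem[OF fW mW] by (simp add: Idx_def)
  qed
qed

lemma card_Idx_sum:
  "card (Idx i) = (\<Sum>W\<in>{W. W \<subseteq> {0..<n} \<and> card W = Suc i}. card (Lrep W ` W))"
proof -
  let ?Ws = "{W. W \<subseteq> {0..<n} \<and> card W = Suc i}"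
  have fWs: "finite ?Ws" by (rule finite_subset[of _ "Pow {0..<n}"]) auto
  have "Idx i = Sigma ?Ws (\<lambda>W. {x\<in>W. Lrep W x = x})" by (auto simp: Idx_def)
  moreover have "card (Sigma ?Ws (\<lambda>W. {x\<in>W. Lrep W x = x})) = (\<Sum>W\<in>?Ws. card {x\<in>W. Lrep W x = x})"
    by (rule card_SigmaI[OF fWs]) (auto intro: finite_subset[of _ "{0..<n}"])
  ultimately have "card (Idx i) = (\<Sum>W\<in>?Ws. card {x\<in>W. Lrep W x = x})" by simp
  also have "\<dots> = (\<Sum>W\<in>?Ws. card (Lrep W ` W))"
    by (rule sum.cong) (auto simp: cls_eq finite_subset)
  finally show ?thesis .
qed
end

context cg begin

definition cnt :: "nat set \<Rightarrow> nat \<Rightarrow> nat" where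
  "cnt W r = (if W \<inter> Cl r = {} then 0 else 1) + (if W \<inter> Cl r \<in> SPL r then 1 else 0)"

lemma card_cls:
  assumes W: "W \<subseteq> {0..<l * m}"
  shows "card (Lrep W ` W) = (\<Sum>r<l. cnt W r)"
proof -
  have fW: "finite W" using W finite_subset by blast
  have "W = (\<Union>r<l. W \<inter> Cl r)"
    using W l0 by (auto simp: Cl_def)
  then have "Lrep W ` W = (\<Union>r<l. Lrep W ` (W \<inter> Cl r))" by blast
  moreover have sub: "Lrep W ` (W \<inter> Cl r) \<subseteq> Cl r" for r
  proof clarify
    fix a assume a: "a \<in> W" "a \<in> Cl r"
    have "Lrep W a \<in> W" "Conn W a (Lrep W a)" using Lrep_mem[OF fW a(1)] by auto
    then show "Lrep W a \<in> Cl r" using Conn_mod[OF W] a W by (auto simp: Cl_def)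
  qed
  moreover have "card (\<Union>r<l. Lrep W ` (W \<inter> Cl r)) = (\<Sum>r<l. card (Lrep W ` (W \<inter> Cl r)))"
  proof (rule card_UN_disjoint)
    show "\<forall>r\<in>{..<l}. \<forall>s\<in>{..<l}. r \<noteq> s \<longrightarrow> Lrep W ` (W \<inter> Cl r) \<inter> Lrep W ` (W \<inter> Cl s) = {}"
    proof (intro ballI impI)
      fix r s :: nat assume "r \<noteq> s"
      then have "Cl r \<inter> Cl s = {}" by (auto simp: Cl_def)
      then show "Lrep W ` (W \<inter> Cl r) \<inter> Lrep W ` (W \<inter> Cl s) = {}" using sub[of r] sub[of s] by blast
    qed
  qed (use fW in auto)
  ultimately show ?thesis
    using class_card[OF W] by (simp add: cnt_def)
qed

end

lemma choose_mono_add: "(a choose k) \<le> ((a + d) choose k)"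
proof (induct d)
  case (Suc d)
  have "((a + d) choose k) \<le> (Suc (a + d) choose k)"
    by (cases k) auto
  then show ?case using Suc by simp
qed simp

lemma choose_mono_n: "a \<le> b \<Longrightarrow> (a choose k) \<le> (b choose k)"
  using choose_mono_add[of a k "b - a"] by simp

context cg begin

lemma SPL_sub: "r < l \<Longrightarrow> A \<in> SPL r \<Longrightarrow> A \<subseteq> Cl r"
  by (auto simp: SPL_def P2_def P3_def Cl_eq sc_lt pc_lt)

lemma finite_SPL: "finite (SPL r)"
  by (simp add: SPL_def)

lemma sum_cnt:
  assumes r: "r < l"
  shows "(\<Sum>W\<in>{W. W \<subseteq> {0..<l * m} \<and> card W = k}. cnt W r) =
     (((l * m) choose k) - ((l * m - m) choose k)) +
     (m * (if 2 \<le> k then (l * m - m) choose (k - 2) else 0) + m * (if 3 \<le> k then (l * m - m) choose (k - 3) else 0))"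
proof -
  let ?X = "{0..<l * m}"
  let ?Ws = "{W. W \<subseteq> ?X \<and> card W = k}"
  have fWs: "finite ?Ws" by (rule finite_subset[of _ "Pow ?X"]) auto
  have CX: "Cl r \<subseteq> ?X" by (rule Cl_sub)
  have cC: "card ?X - card (Cl r) = l * m - m" using card_Cl[OF r] by simp
  have "(\<Sum>W\<in>?Ws. if W \<inter> Cl r = {} then 0 else 1) = (\<Sum>W\<in>?Ws. if W \<inter> Cl r \<noteq> {} then 1 else (0::nat))"
    by (rule sum.cong) auto
  also have "\<dots> = card {W\<in>?Ws. W \<inter> Cl r \<noteq> {}}" by (rule sum_if_card[OF fWs])
  finally have s1: "(\<Sum>W\<in>?Ws. if W \<inter> Cl r = {} then 0 else 1) = card {W\<in>?Ws. W \<inter> Cl r \<noteq> {}}" .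
  have e0: "{W\<in>?Ws. W \<inter> Cl r = {}} = {W. W \<subseteq> ?X \<and> card W = k \<and> W \<inter> Cl r = {}}" by auto
  have c0: "card {W\<in>?Ws. W \<inter> Cl r = {}} = (l * m - m) choose k"
    unfolding e0 using fiber_card[OF CX, of "{}" k] cC by simp
  have cW: "card ?Ws = (l * m) choose k" using n_subsets[of ?X k] by simp
  have eD: "{W\<in>?Ws. W \<inter> Cl r \<noteq> {}} = ?Ws - {W\<in>?Ws. W \<inter> Cl r = {}}" by auto
  have s1': "card {W\<in>?Ws. W \<inter> Cl r \<noteq> {}} = ((l * m) choose k) - ((l * m - m) choose k)"
  proof -
    have "card (?Ws - {W\<in>?Ws. W \<inter> Cl r = {}}) = card ?Ws - card {W\<in>?Ws. W \<inter> Cl r = {}}"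
      by (rule card_Diff_subset) (use fWs in auto)
    then show ?thesis using eD c0 cW by simp
  qed
  have s2: "(\<Sum>W\<in>?Ws. if W \<inter> Cl r \<in> SPL r then 1 else 0) = card {W\<in>?Ws. W \<inter> Cl r \<in> SPL r}"
    by (rule sum_if_card[OF fWs])
  have eU: "{W\<in>?Ws. W \<inter> Cl r \<in> SPL r} = (\<Union>A\<in>SPL r. {W. W \<subseteq> ?X \<and> card W = k \<and> W \<inter> Cl r = A})" by auto
  have "card {W\<in>?Ws. W \<inter> Cl r \<in> SPL r} = (\<Sum>A\<in>SPL r. card {W. W \<subseteq> ?X \<and> card W = k \<and> W \<inter> Cl r = A})"
  proof -
    have "card (\<Union>A\<in>SPL r. {W. W \<subseteq> ?X \<and> card W = k \<and> W \<inter> Cl r = A}) = (\<Sum>A\<in>SPL r. card {W. W \<subseteq> ?X \<and> card W = k \<and> W \<inter> Cl r = A})"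
    proof (rule card_UN_disjoint)
      show "finite (SPL r)" by (rule finite_SPL)
      show "\<forall>A\<in>SPL r. finite {W. W \<subseteq> ?X \<and> card W = k \<and> W \<inter> Cl r = A}"
        by (auto intro: finite_subset[of _ "Pow ?X"])
      show "\<forall>A\<in>SPL r. \<forall>B\<in>SPL r. A \<noteq> B \<longrightarrow> {W. W \<subseteq> ?X \<and> card W = k \<and> W \<inter> Cl r = A} \<inter> {W. W \<subseteq> ?X \<and> card W = k \<and> W \<inter> Cl r = B} = {}"
        by blast
    qed
    then show ?thesis using eU by simp
  qed
  also have "\<dots> = (\<Sum>A\<in>SPL r. (\<lambda>c. if c \<le> k then (l * m - m) choose (k - c) else 0) (card A))"
    by (rule sum.cong) (use fiber_card[OF CX] SPL_sub[OF r] cC in auto)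
  also have "\<dots> = m * (if 2 \<le> k then (l * m - m) choose (k - 2) else 0) + m * (if 3 \<le> k then (l * m - m) choose (k - 3) else 0)"
    by (rule sum_SPL[OF r])
  finally have s2': "card {W\<in>?Ws. W \<inter> Cl r \<in> SPL r} = \<dots>" .
  show ?thesis unfolding cnt_def sum.distrib s1 s1' s2 s2' by simp
qed

lemma card_Idx_formula:
  assumes i1: "1 \<le> i"
  shows "card (Idx i) = l * ((((l * m) choose Suc i) - ((l * m - m) choose Suc i)) + m * ((l * m - m + 1) choose (i - 1)))"
proof -
  let ?Ws = "{W. W \<subseteq> {0..<l * m} \<and> card W = Suc i}"
  have h: "m * (if 2 \<le> Suc i then (l * m - m) choose (Suc i - 2) else 0) + m * (if 3 \<le> Suc i then (l * m - m) choose (Suc i - 3) else 0)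
      = m * ((l * m - m + 1) choose (i - 1))"
  proof (cases "i = 1")
    case True then show ?thesis by simp
  next
    case False
    then obtain j where j: "i = Suc (Suc j)" using i1 by (metis One_nat_def Suc_le_D le_SucE le_zero_eq)
    show ?thesis by (simp add: j add_mult_distrib2[symmetric])
  qed
  have "card (Idx i) = (\<Sum>W\<in>?Ws. card (Lrep W ` W))" by (rule card_Idx_sum)
  also have "\<dots> = (\<Sum>W\<in>?Ws. \<Sum>r<l. cnt W r)" by (rule sum.cong[OF refl]) (rule card_cls, simp)
  also have "\<dots> = (\<Sum>r<l. \<Sum>W\<in>?Ws. cnt W r)" by (rule sum.swap)
  also have "\<dots> = (\<Sum>r<l. (((l * m) choose Suc i) - ((l * m - m) choose Suc i)) + m * ((l * m - m + 1) choose (i - 1)))"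
    by (rule sum.cong[OF refl]) (simp only: sum_cnt lessThan_iff h)
  finally show ?thesis by simp
qed

end

theorem theorem4p3:
  fixes m l i :: nat
  assumes "m \<ge> 5" and "l \<ge> 2" and "i \<ge> 1"
  shows "int (betti TYPE('k::field) (l * m)
              (circulant_adj (l * m) {s \<in> {1 .. (l * m) div 2}. s = l \<or> \<not> l dvd s}) i (i + 1))
         = int (l * m * ((l - 1) * m + 1 choose (i - 1))) + int ((l - 1) * (l * m choose (i + 1)))
           - int (l * ((l - 1) * m choose (i + 1)))"
proof -
  interpret cg l m using assms by unfold_locales
  have b: "betti TYPE('k) (l * m) (circulant_adj (l * m) {s \<in> {1 .. (l * m) div 2}. s = l \<or> \<not> l dvd s}) i (i + 1)
      = card (Idx i) - (l * m choose Suc i)"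
    by (rule betti_eq) (use assms in simp)
  have lo: "(l * m choose Suc i) \<le> card (Idx i)"
    using Idx_lower[of i] n_subsets[of "{0..<l * m}" "Suc i"] by simp
  have ci: "card (Idx i) = l * ((((l * m) choose Suc i) - ((l * m - m) choose Suc i)) + m * ((l * m - m + 1) choose (i - 1)))"
    by (rule card_Idx_formula) (use assms in simp)
  have lm: "(l - 1) * m = l * m - m" by (simp add: diff_mult_distrib)
  have mono: "((l * m - m) choose Suc i) \<le> ((l * m) choose Suc i)" by (rule choose_mono_n) simp
  have l1: "int (l - 1) = int l - 1" using assms by simp
  define A where "A = l * m choose Suc i"
  define B where "B = (l * m - m) choose Suc i"
  define P where "P = (l * m - m + 1) choose (i - 1)"
  have ciA: "card (Idx i) = l * ((A - B) + m * P)" using ci by (simp add: A_def B_def P_def)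
  have e1: "int (card (Idx i) - A) = int (card (Idx i)) - int A" using lo by (simp add: A_def)
  have e2: "int (card (Idx i)) = int l * ((int A - int B) + int m * int P)"
    using ciA mono by (simp add: of_nat_diff B_def A_def)
  have e3: "int (l * m * P) = int l * int m * int P" by simp
  have e4: "int ((l - 1) * A) = (int l - 1) * int A" using l1 by simp
  have e5: "int (l * B) = int l * int B" by simp
  have ii: "i + 1 = Suc i" by simp
  show ?thesis
    unfolding b unfolding lm ii A_def[symmetric] B_def[symmetric] P_def[symmetric] e1 e2 e3 e4 e5
    by (simp add: algebra_simps)
qed



end
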